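(* Fix an outer iteration $k$ of SREDA and the inner procedure described in the context. Let $g(y)=-f(x_{k+1},y)$, $\tilde y_k^*=\arg\min_yg(y)$ and $\hat u_{k,t}=-\tilde u_{k,t}$. Then $$\sum_{t=0}^m\mathbb{E}\|\nabla g(\tilde y_{k,t})\|^2\le\frac2\lambda\mathbb{E}\big[g(\tilde y_{k,0})-g(\tilde y_k^* )\big]+\sum_{t=0}^m\mathbb{E}\|\nabla g(\tilde y_{k,t})-\hat u_{k,t}\|^2-(1-\ell\lambda)\sum_{t=0}^m\mathbb{E}\|\hat u_{k,t}\|^2.$$
   Context: Problem: $f(x,y)=\mathbb{E}[F(x,y;\xi)]$ on $\mathbb{R}^{d_1}\times\mathbb{R}^{d_2}$ with (A2) $\mathbb{E}\|\nabla F(x,y;\xi)-\nabla F(x',y';\xi)\|^2\le\ell^2(\|x-x'\|^2+\|y-y'\|^2)$, (A3) $F(x,\cdot;\xi)$ concave for each $\xi,x$, (A4) $f(x,\cdot)$ $\mu$-strongly concave, and also $\max_yf(\cdot,y)$ bounded below and $\mathbb{E}\|\nabla F-\nabla f\|^2\le\sigma^2$. $G_x=\nabla_xF$, $G_y=\nabla_yF$; samples are i.i.d. copies of $\xi$ independent of everything else. Inner procedure at outer iteration $k$ (step size $\lambda>0$, batch size $S_2$, integer $m$): given $x_k,y_k$, estimates $v_k,u_k$ and $x_{k+1}$, set $\tilde x_{k,-1}=x_k,\tilde y_{k,-1}=y_k,\tilde v_{k,-1}=v_k,\tilde u_{k,-1}=u_k,\tilde x_{k,0}=x_{k+1},\tilde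 y_{k,0}=y_k$; for $t=0,\dots,m+1$ draw $S_2$ fresh samples $\xi_{t,i}$ and set $\tilde v_{k,t}=\tilde v_{k,t-1}+\frac1{S_2}\sum_i[G_x(\tilde x_{k,t},\tilde y_{k,t};\xi_{t,i})-G_x(\tilde x_{k,t-1},\tilde y_{k,t-1};\xi_{t,i})]$, $\tilde u_{k,t}=\tilde u_{k,t-1}+\frac1{S_2}\sum_i[G_y(\tilde x_{k,t},\tilde y_{k,t};\xi_{t,i})-G_y(\tilde x_{k,t-1},\tilde y_{k,t-1};\xi_{t,i})]$, $\tilde x_{k,t+1}=\tilde x_{k,t}$, $\tilde y_{k,t+1}=\tilde y_{k,t}+\lambda\tilde u_{k,t}$. *)

theory Defs
  imports "HOL-Probability.Probability"
begin

definition strongly_concave_on :: "real \<Rightarrow> 'b::real_normed_vector set \<Rightarrow> ('b \<Rightarrow> real) \<Rightarrow> bool" where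
  "strongly_concave_on \<mu> S h \<longleftrightarrow> convex S \<and>
     (\<forall>y\<in>S. \<forall>y'\<in>S. \<forall>\<theta>::real. 0 \<le> \<theta> \<and> \<theta> \<le> 1 \<longrightarrow>
        h (\<theta> *\<^sub>R y + (1 - \<theta>) *\<^sub>R y') \<ge>
          \<theta> * h y + (1 - \<theta>) * h y' + \<mu> / 2 * \<theta> * (1 - \<theta>) * (norm (y - y'))\<^sup>2)"

definition batch_avg :: "nat \<Rightarrow> (nat \<Rightarrow> 'c) \<Rightarrow> ('c \<Rightarrow> 'v::real_vector) \<Rightarrow> 'v" where
  "batch_avg S2 s h = (1 / real S2) *\<^sub>R (\<Sum>i<S2. h (s i))"

text \<open>The sreda_inner procedure of SREDA at a fixed outer iteration, pathwise
  (for a fixed realisation \<open>xi t i\<close> of the samples \<open>\<xi>_{t,i}\<close>).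
  \<open>sreda_inner Gx Gy lam S2 xi xk yk vk uk xk1 t = (x~_{k,t}, y~_{k,t}, v~_{k,t}, u~_{k,t})\<close>
  for \<open>t \<ge> 0\<close>; the values at index -1 are \<open>(xk, yk, vk, uk)\<close>, and
  \<open>x~_{k,0} = xk1\<close>, \<open>y~_{k,0} = yk\<close>.\<close>
fun sreda_inner ::
  "('a::euclidean_space \<Rightarrow> 'b::euclidean_space \<Rightarrow> 'c \<Rightarrow> 'a) \<Rightarrow> ('a \<Rightarrow> 'b \<Rightarrow> 'c \<Rightarrow> 'b) \<Rightarrow>
   real \<Rightarrow> nat \<Rightarrow> (nat \<Rightarrow> nat \<Rightarrow> 'c) \<Rightarrow> 'a \<Rightarrow> 'b \<Rightarrow> 'a \<Rightarrow> 'b \<Rightarrow> 'a \<Rightarrow> nat \<Rightarrow> 'a \<times> 'b \<times> 'a \<times> 'b" where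
  "sreda_inner Gx Gy lam S2 xi xk yk vk uk xk1 0 =
     (xk1, yk,
      vk + batch_avg S2 (xi 0) (\<lambda>\<xi>. Gx xk1 yk \<xi> - Gx xk yk \<xi>),
      uk + batch_avg S2 (xi 0) (\<lambda>\<xi>. Gy xk1 yk \<xi> - Gy xk yk \<xi>))"
| "sreda_inner Gx Gy lam S2 xi xk yk vk uk xk1 (Suc t) =
     (case sreda_inner Gx Gy lam S2 xi xk yk vk uk xk1 t of (x, y, v, u) \<Rightarrow>
       let x' = x; y' = y + lam *\<^sub>R u in
       (x', y',
        v + batch_avg S2 (xi (Suc t)) (\<lambda>\<xi>. Gx x' y' \<xi> - Gx x y \<xi>),
        u + batch_avg S2 (xi (Suc t)) (\<lambda>\<xi>. Gy x' y' \<xi> - Gy x y \<xi>)))"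

end

theory Submission
  imports Defs
begin


lemma grad_lip:
  fixes Gx :: "'a::euclidean_space \<Rightarrow> 'b::euclidean_space \<Rightarrow> 'c \<Rightarrow> 'a"
    and Gy :: "'a \<Rightarrow> 'b \<Rightarrow> 'c \<Rightarrow> 'b"
  assumes D: "prob_space D"
    and Gy_int: "\<And>x y. integrable D (Gy x y)"
    and A2: "\<And>x y x' y'. (\<integral>\<^sup>+ s. ennreal ((norm (Gx x y s - Gx x' y' s))\<^sup>2 + (norm (Gy x y s - Gy x' y' s))\<^sup>2) \<partial>D)
                 \<le> ennreal (ell\<^sup>2 * ((norm (x - x'))\<^sup>2 + (norm (y - y'))\<^sup>2))"
    and ell_pos: "ell > 0"
  shows "norm ((\<integral>s. Gy x y s \<partial>D) - (\<integral>s. Gy x y' s \<partial>D)) \<le> ell * norm (y - y')"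
proof (cases "y = y'")
  case True then show ?thesis by simp
next
  case False
  interpret prob_space D by (rule D)
  define c where "c = ell * norm (y - y')"
  have c_pos: "c > 0" using False ell_pos by (simp add: c_def)
  define N where "N = (\<lambda>s. norm (Gy x y s - Gy x y' s))"
  have hint: "integrable D (\<lambda>s. Gy x y s - Gy x y' s)" using Gy_int by auto
  have Nint: "integrable D N" unfolding N_def using hint by (rule integrable_norm)
  have Nmeas: "N \<in> borel_measurable D" using Nint by auto
  have nn: "(\<integral>\<^sup>+ s. ennreal ((N s)\<^sup>2) \<partial>D) \<le> ennreal (c\<^sup>2)"
  proof -
    have "(\<integral>\<^sup>+ s. ennreal ((N s)\<^sup>2) \<partial>D) \<le> (\<integral>\<^sup>+ s. ennreal ((norm (Gx x y s - Gx x y' s))\<^sup>2 + (N s)\<^sup>2) \<partial>D)"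
      by (intro nn_integral_mono ennreal_leI) simp
    also have "\<dots> \<le> ennreal (ell\<^sup>2 * ((norm (x - x))\<^sup>2 + (norm (y - y'))\<^sup>2))"
      using A2[of x y x y'] unfolding N_def by simp
    also have "\<dots> = ennreal (c\<^sup>2)" by (simp add: c_def power_mult_distrib)
    finally show ?thesis .
  qed
  have N2meas: "(\<lambda>s. (N s)\<^sup>2) \<in> borel_measurable D" using Nmeas by (intro borel_measurable_power)
  have N2int: "integrable D (\<lambda>s. (N s)\<^sup>2)"
  proof (rule integrableI_nonneg[OF N2meas])
    show "AE x in D. 0 \<le> (N x)\<^sup>2" by simp
    show "(\<integral>\<^sup>+ s. ennreal ((N s)\<^sup>2) \<partial>D) < \<infinity>"
      by (rule le_less_trans[OF nn]) simp
  qed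
  have N2bound: "(\<integral>s. (N s)\<^sup>2 \<partial>D) \<le> c\<^sup>2"
  proof -
    have "(\<integral>s. (N s)\<^sup>2 \<partial>D) = enn2real (\<integral>\<^sup>+ s. ennreal ((N s)\<^sup>2) \<partial>D)"
      by (rule integral_eq_nn_integral[OF N2meas]) auto
    also have "\<dots> \<le> enn2real (ennreal (c\<^sup>2))" by (rule enn2real_mono[OF nn]) simp
    also have "\<dots> = c\<^sup>2" by simp
    finally show ?thesis .
  qed
  have "norm ((\<integral>s. Gy x y s \<partial>D) - (\<integral>s. Gy x y' s \<partial>D)) = norm (\<integral>s. Gy x y s - Gy x y' s \<partial>D)"
    using Gy_int by (simp add: Bochner_Integration.integral_diff)
  also have "\<dots> \<le> (\<integral>s. N s \<partial>D)" unfolding N_def by (rule integral_norm_bound)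
  also have "\<dots> \<le> (\<integral>s. (N s)\<^sup>2 / (2*c) + c/2 \<partial>D)"
  proof (rule integral_mono[OF Nint])
    show "integrable D (\<lambda>s. (N s)\<^sup>2 / (2*c) + c/2)" using N2int by auto
    fix s
    have "0 \<le> (N s - c)\<^sup>2" by simp
    then have "2 * c * N s \<le> (N s)\<^sup>2 + c\<^sup>2" by (simp add: power2_eq_square algebra_simps)
    then show "N s \<le> (N s)\<^sup>2 / (2*c) + c/2" using c_pos
      by (simp add: field_simps power2_eq_square)
  qed
  also have "\<dots> = (\<integral>s. (N s)\<^sup>2 \<partial>D) / (2*c) + c/2"
    using N2int by (simp add: prob_space)
  also have "\<dots> \<le> c\<^sup>2 / (2*c) + c/2"
    using N2bound c_pos by (simp add: divide_right_mono)
  also have "\<dots> = c" using c_pos by (simp add: power2_eq_square field_simps)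
  finally show ?thesis unfolding c_def .
qed

lemma descent:
  fixes \<phi> :: "'b::euclidean_space \<Rightarrow> real" and G :: "'b \<Rightarrow> 'b"
  assumes der: "\<And>y. (\<phi> has_derivative (\<lambda>h. G y \<bullet> h)) (at y)"
    and lip: "\<And>y y'. norm (G y - G y') \<le> L * norm (y - y')"
  shows "\<phi> y' \<le> \<phi> y + G y \<bullet> (y' - y) + L/2 * (norm (y' - y))\<^sup>2"
proof -
  define d where "d = y' - y"
  define \<psi> where "\<psi> = (\<lambda>t::real. \<phi> (y + t *\<^sub>R d) - t * (G y \<bullet> d) - L/2 * t\<^sup>2 * (norm d)\<^sup>2)"
  have line: "((\<lambda>t::real. y + t *\<^sub>R d) has_derivative (\<lambda>h. h *\<^sub>R d)) (at t)" for t
    by (auto intro!: derivative_eq_intros)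
  have comp: "((\<lambda>t. \<phi> (y + t *\<^sub>R d)) has_real_derivative (G (y + t *\<^sub>R d) \<bullet> d)) (at t)" for t
  proof -
    have "((\<lambda>t. \<phi> (y + t *\<^sub>R d)) has_derivative (\<lambda>h. G (y + t *\<^sub>R d) \<bullet> (h *\<^sub>R d))) (at t)"
      using has_derivative_compose[OF line der] by (simp add: o_def)
    then show ?thesis unfolding has_field_derivative_def
      by (rule has_derivative_eq_rhs) (auto simp: mult.commute)
  qed
  have dpsi: "(\<psi> has_real_derivative (G (y + t *\<^sub>R d) \<bullet> d - G y \<bullet> d - L * t * (norm d)\<^sup>2)) (at t)" for t
    unfolding \<psi>_def
    by (rule derivative_eq_intros comp refl | simp)+
  have "\<psi> 1 \<le> \<psi> 0"
  proof (rule DERIV_nonpos_imp_nonincreasing[of 0 1 \<psi>])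
    fix t :: real assume t: "0 \<le> t" "t \<le> 1"
    have "G (y + t *\<^sub>R d) \<bullet> d - G y \<bullet> d = (G (y + t *\<^sub>R d) - G y) \<bullet> d"
      by (simp add: inner_diff_left)
    also have "\<dots> \<le> norm (G (y + t *\<^sub>R d) - G y) * norm d" by (rule norm_cauchy_schwarz)
    also have "\<dots> \<le> (L * norm (t *\<^sub>R d)) * norm d"
      using lip[of "y + t *\<^sub>R d" y] by (intro mult_right_mono) auto
    also have "\<dots> = L * t * (norm d)\<^sup>2" using t by (simp add: power2_eq_square)
    finally show "\<exists>y. DERIV \<psi> t :> y \<and> y \<le> 0" using dpsi[of t] by auto
  qed simp
  then show ?thesis unfolding \<psi>_def d_def by (simp add: algebra_simps)
qed

lemma sc_max_exists:
  fixes h :: "'b::euclidean_space \<Rightarrow> real"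
  assumes sc: "strongly_concave_on \<mu> UNIV h" and mu: "\<mu> > 0" and cont: "continuous_on UNIV h"
  shows "\<exists>y0. \<forall>y. h y \<le> h y0"
proof -
  obtain z1 where z1: "z1 \<in> cball 0 1" "\<And>z. z \<in> cball 0 1 \<Longrightarrow> h z \<le> h z1"
    using continuous_attains_sup[of "cball (0::'b) 1" h] continuous_on_subset[OF cont, of "cball 0 1"]
    by auto
  define B where "B = h z1"
  have B0: "h 0 \<le> B" using z1 by (simp add: B_def)
  have key: "norm y \<le> 1 + 2 * (B - h 0) / \<mu>" if y: "norm y \<ge> 1" "h y \<ge> h 0" for y
  proof -
    define R where "R = norm y"
    have R1: "R \<ge> 1" using y by (simp add: R_def)
    define \<theta> where "\<theta> = 1 / R"
    have th: "0 \<le> \<theta>" "\<theta> \<le> 1" using R1 by (auto simp: \<theta>_def)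
    have "h (\<theta> *\<^sub>R y + (1 - \<theta>) *\<^sub>R 0) \<ge> \<theta> * h y + (1 - \<theta>) * h 0 + \<mu> / 2 * \<theta> * (1 - \<theta>) * (norm (y - 0))\<^sup>2"
      using sc th unfolding strongly_concave_on_def by blast
    moreover have "\<theta> *\<^sub>R y + (1 - \<theta>) *\<^sub>R 0 \<in> cball 0 1"
      using R1 by (simp add: \<theta>_def R_def)
    ultimately have "B \<ge> \<theta> * h y + (1 - \<theta>) * h 0 + \<mu> / 2 * \<theta> * (1 - \<theta>) * R\<^sup>2"
      using z1(2) unfolding B_def R_def by fastforce
    moreover have "\<theta> * h y \<ge> \<theta> * h 0" using th y by (simp add: mult_left_mono)
    moreover have "\<mu> / 2 * \<theta> * (1 - \<theta>) * R\<^sup>2 = \<mu> / 2 * (R - 1)"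
      using R1 by (simp add: \<theta>_def power2_eq_square field_simps)
    moreover have "(1 - \<theta>) * h 0 = h 0 - \<theta> * h 0" by (simp add: algebra_simps)
    ultimately have "B \<ge> h 0 + \<mu> / 2 * (R - 1)" by linarith
    then have "\<mu> * (R - 1) \<le> 2 * (B - h 0)" by simp
    then have "R - 1 \<le> 2 * (B - h 0) / \<mu>" using mu by (simp add: field_simps)
    then show ?thesis by (simp add: R_def)
  qed
  define R1 where "R1 = 2 + 2 * (B - h 0) / \<mu>"
  have R1pos: "R1 \<ge> 2" using B0 mu by (simp add: R1_def)
  obtain ym where ym: "ym \<in> cball 0 R1" "\<And>z. z \<in> cball 0 R1 \<Longrightarrow> h z \<le> h ym"
    using continuous_attains_sup[of "cball (0::'b) R1" h] continuous_on_subset[OF cont, of "cball 0 R1"] R1pos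
    by auto
  have "h y \<le> h ym" for y
  proof (cases "y \<in> cball 0 R1")
    case True then show ?thesis using ym by blast
  next
    case False
    then have ny: "norm y > R1" by simp
    have "h 0 \<le> h ym" using ym(2)[of 0] R1pos by simp
    moreover have "h y < h 0"
    proof (rule ccontr)
      assume "\<not> h y < h 0"
      then have "norm y \<le> 1 + 2 * (B - h 0) / \<mu>" using key[of y] ny R1pos by simp
      then show False using ny by (simp add: R1_def)
    qed
    ultimately show ?thesis by simp
  qed
  then show ?thesis by blast
qed

theorem lemma9:
  fixes D :: "'c measure"
    and F :: "'a::euclidean_space \<Rightarrow> 'b::euclidean_space \<Rightarrow> 'c \<Rightarrow> real"
    and Gx :: "'a \<Rightarrow> 'b \<Rightarrow> 'c \<Rightarrow> 'a"
    and Gy :: "'a \<Rightarrow> 'b \<Rightarrow> 'c \<Rightarrow> 'b"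
    and f :: "'a \<Rightarrow> 'b \<Rightarrow> real"
    and ell \<mu> \<sigma> lam :: real and S2 m :: nat
    and M :: "'w measure"
    and xk xk1 vk :: "'w \<Rightarrow> 'a" and yk uk :: "'w \<Rightarrow> 'b"
    and \<xi> :: "nat \<Rightarrow> nat \<Rightarrow> 'w \<Rightarrow> 'c"
  assumes D: "prob_space D"
    and F_meas: "\<And>x y. integrable D (F x y)"
    and Gx_int: "\<And>x y. integrable D (Gx x y)"
    and Gy_int: "\<And>x y. integrable D (Gy x y)"
    and f_def: "\<And>x y. f x y = (\<integral>s. F x y s \<partial>D)"
    and F_grad: "\<And>x y s. s \<in> space D \<Longrightarrow>
        ((\<lambda>z. F (fst z) (snd z) s) has_derivative
          (\<lambda>h. Gx x y s \<bullet> fst h + Gy x y s \<bullet> snd h)) (at (x, y))"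
    and f_grad: "\<And>x y. ((\<lambda>z. f (fst z) (snd z)) has_derivative
          (\<lambda>h. (\<integral>s. Gx x y s \<partial>D) \<bullet> fst h + (\<integral>s. Gy x y s \<partial>D) \<bullet> snd h)) (at (x, y))"
    and A2: "\<And>x y x' y'. (\<integral>\<^sup>+ s. ennreal ((norm (Gx x y s - Gx x' y' s))\<^sup>2 + (norm (Gy x y s - Gy x' y' s))\<^sup>2) \<partial>D)
                 \<le> ennreal (ell\<^sup>2 * ((norm (x - x'))\<^sup>2 + (norm (y - y'))\<^sup>2))"
    and A3: "\<And>x s. s \<in> space D \<Longrightarrow> concave_on UNIV (\<lambda>y. F x y s)"
    and A4: "\<And>x. strongly_concave_on \<mu> UNIV (f x)"
    and ell_pos: "ell > 0" and \<mu>_pos: "\<mu> > 0"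
    and bdd: "bdd_below (range (\<lambda>x. SUP y. f x y))"
    and var: "\<And>x y. (\<integral>\<^sup>+ s. ennreal ((norm (Gx x y s - (\<integral>s'. Gx x y s' \<partial>D)))\<^sup>2
                          + (norm (Gy x y s - (\<integral>s'. Gy x y s' \<partial>D)))\<^sup>2) \<partial>D) \<le> ennreal (\<sigma>\<^sup>2)"
    and lam_pos: "lam > 0" and S2_pos: "S2 \<ge> 1"
    and M: "prob_space M"
    and rv: "xk \<in> borel_measurable M" "yk \<in> borel_measurable M" "vk \<in> borel_measurable M"
            "uk \<in> borel_measurable M" "xk1 \<in> borel_measurable M"
    and samp_meas: "\<And>t i. \<xi> t i \<in> measurable M D"
    and samp_distr: "\<And>t i. distr M D (\<xi> t i) = D"
    and samp_indep: "prob_space.indep_vars M (\<lambda>_. D) (\<lambda>ti. \<xi> (fst ti) (snd ti)) ({..Suc m} \<times> {..<S2})"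
    and samp_indep_rest: "prob_space.indep_set M
          (sets (vimage_algebra (space M) (\<lambda>w. (xk w, yk w, vk w, uk w, xk1 w)) borel))
          (sets (vimage_algebra (space M)
             (\<lambda>w. \<lambda>ti\<in>{..Suc m} \<times> {..<S2}. \<xi> (fst ti) (snd ti) w)
             (Pi\<^sub>M ({..Suc m} \<times> {..<S2}) (\<lambda>_. D))))"
  defines "g \<equiv> \<lambda>w y. - f (xk1 w) y"
    and "grad_g \<equiv> \<lambda>w y. - (\<integral>s. Gy (xk1 w) y s \<partial>D)"
    and "ystar \<equiv> \<lambda>w. (SOME y0. \<forall>y. - f (xk1 w) y0 \<le> - f (xk1 w) y)"
    and "ytil \<equiv> \<lambda>w t. fst (snd (sreda_inner Gx Gy lam S2 (\<lambda>t i. \<xi> t i w) (xk w) (yk w) (vk w) (uk w) (xk1 w) t))"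
    and "uhat \<equiv> \<lambda>w t. - snd (snd (snd (sreda_inner Gx Gy lam S2 (\<lambda>t i. \<xi> t i w) (xk w) (yk w) (vk w) (uk w) (xk1 w) t)))"
  assumes int_gap: "integrable M (\<lambda>w. g w (ytil w 0) - g w (ystar w))"
    and int_grad: "\<And>t. t \<le> m \<Longrightarrow> integrable M (\<lambda>w. (norm (grad_g w (ytil w t)))\<^sup>2)"
    and int_err: "\<And>t. t \<le> m \<Longrightarrow> integrable M (\<lambda>w. (norm (grad_g w (ytil w t) - uhat w t))\<^sup>2)"
    and int_uhat: "\<And>t. t \<le> m \<Longrightarrow> integrable M (\<lambda>w. (norm (uhat w t))\<^sup>2)"
  shows "(\<Sum>t\<le>m. \<integral>w. (norm (grad_g w (ytil w t)))\<^sup>2 \<partial>M)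
          \<le> 2 / lam * (\<integral>w. g w (ytil w 0) - g w (ystar w) \<partial>M)
            + (\<Sum>t\<le>m. \<integral>w. (norm (grad_g w (ytil w t) - uhat w t))\<^sup>2 \<partial>M)
            - (1 - ell * lam) * (\<Sum>t\<le>m. \<integral>w. (norm (uhat w t))\<^sup>2 \<partial>M)"
  proof -
  have fy_der: "((\<lambda>y. f x y) has_derivative (\<lambda>h. (\<integral>s. Gy x y s \<partial>D) \<bullet> h)) (at y)" for x y
  proof -
    have l: "((\<lambda>y. (x, y)) has_derivative (\<lambda>h. (0, h))) (at y)"
      by (auto intro!: derivative_eq_intros)
    have "((\<lambda>y. (\<lambda>z. f (fst z) (snd z)) (x, y)) has_derivative
        (\<lambda>h. (\<lambda>h. (\<integral>s. Gx x y s \<partial>D) \<bullet> fst h + (\<integral>s. Gy x y s \<partial>D) \<bullet> snd h) (0, h))) (at y)"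
      using has_derivative_compose[OF l f_grad[of x y]] by (simp add: o_def)
    then show ?thesis by simp
  qed
  have g_der: "(g w has_derivative (\<lambda>h. grad_g w y \<bullet> h)) (at y)" for w y
    unfolding g_def grad_g_def using has_derivative_minus[OF fy_der[of "xk1 w" y]]
    by (simp add: inner_minus_left)
  have g_lip: "norm (grad_g w y - grad_g w y') \<le> ell * norm (y - y')" for w y y'
  proof -
    have "norm (grad_g w y - grad_g w y') = norm ((\<integral>s. Gy (xk1 w) y s \<partial>D) - (\<integral>s. Gy (xk1 w) y' s \<partial>D))"
      unfolding grad_g_def by (simp add: norm_minus_commute)
    also have "\<dots> \<le> ell * norm (y - y')"
      by (rule grad_lip[OF D Gy_int A2 ell_pos])
    finally show ?thesis .
  qed
  have ystar_min: "g w (ystar w) \<le> g w y" for w y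
  proof -
    have cont: "continuous_on UNIV (f (xk1 w))"
      using fy_der[of "xk1 w"] has_derivative_continuous
      by (metis continuous_at_imp_continuous_on)
    obtain y0 where "\<forall>y. f (xk1 w) y \<le> f (xk1 w) y0"
      using sc_max_exists[OF A4 \<mu>_pos cont] by blast
    then have "\<exists>y0. \<forall>y. - f (xk1 w) y0 \<le> - f (xk1 w) y" by auto
    from someI_ex[OF this] show ?thesis unfolding g_def ystar_def by auto
  qed
  have rec: "ytil w (Suc t) = ytil w t - lam *\<^sub>R uhat w t" for w t
    unfolding ytil_def uhat_def
    by (cases "sreda_inner Gx Gy lam S2 (\<lambda>t i. \<xi> t i w) (xk w) (yk w) (vk w) (uk w) (xk1 w) t")
       (simp add: Let_def)
  define A where "A = (\<lambda>w t. (norm (grad_g w (ytil w t)))\<^sup>2)"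
  define E where "E = (\<lambda>w t. (norm (grad_g w (ytil w t) - uhat w t))\<^sup>2)"
  define U where "U = (\<lambda>w t. (norm (uhat w t))\<^sup>2)"
  define Gap where "Gap = (\<lambda>w. g w (ytil w 0) - g w (ystar w))"
  have step: "A w t \<le> 2 / lam * (g w (ytil w t) - g w (ytil w (Suc t))) + E w t - (1 - ell * lam) * U w t" for w t
  proof -
    define a where "a = grad_g w (ytil w t)"
    define b where "b = uhat w t"
    have "g w (ytil w (Suc t)) \<le> g w (ytil w t) + a \<bullet> (ytil w (Suc t) - ytil w t) + ell/2 * (norm (ytil w (Suc t) - ytil w t))\<^sup>2"
      unfolding a_def by (rule descent[OF g_der g_lip])
    also have "ytil w (Suc t) - ytil w t = - (lam *\<^sub>R b)" by (simp add: rec b_def)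
    finally have d: "g w (ytil w (Suc t)) \<le> g w (ytil w t) - lam * (a \<bullet> b) + ell/2 * lam\<^sup>2 * (norm b)\<^sup>2"
      using lam_pos by (simp add: power_mult_distrib)
    have ab: "(norm (a - b))\<^sup>2 = (norm a)\<^sup>2 - 2 * (a \<bullet> b) + (norm b)\<^sup>2"
      by (simp add: power2_norm_eq_inner inner_diff_left inner_diff_right inner_commute)
    have "lam * (norm a)\<^sup>2 \<le> 2 * (g w (ytil w t) - g w (ytil w (Suc t))) + lam * (norm (a - b))\<^sup>2 - lam * (1 - ell * lam) * (norm b)\<^sup>2"
    proof -
      have "(norm a)\<^sup>2 = (norm (a - b))\<^sup>2 + 2 * (a \<bullet> b) - (norm b)\<^sup>2" using ab by linarith
      then have e1: "lam * (norm a)\<^sup>2 = 2 * (lam * (a \<bullet> b)) + lam * (norm (a - b))\<^sup>2 - lam * (norm b)\<^sup>2"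
        by (simp add: right_diff_distrib distrib_left)
      have e2: "lam * (1 - ell * lam) * (norm b)\<^sup>2 = lam * (norm b)\<^sup>2 - 2 * (ell/2 * lam\<^sup>2 * (norm b)\<^sup>2)"
        by (simp add: algebra_simps power2_eq_square)
      have lin: "G1 \<le> G0 - P + Q \<Longrightarrow> 2 * P + X - Y \<le> 2 * (G0 - G1) + X - (Y - 2 * Q)"
        for G0 G1 P Q X Y :: real by (simp add: algebra_simps)
      show ?thesis unfolding e2 e1 by (rule lin[OF d])
    qed
    then have "(norm a)\<^sup>2 \<le> (2 * (g w (ytil w t) - g w (ytil w (Suc t))) + lam * (norm (a - b))\<^sup>2 - lam * (1 - ell * lam) * (norm b)\<^sup>2) / lam"
      using lam_pos by (simp add: field_simps)
    also have "\<dots> = 2 / lam * (g w (ytil w t) - g w (ytil w (Suc t))) + (norm (a - b))\<^sup>2 - (1 - ell * lam) * (norm b)\<^sup>2"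
      using lam_pos by (simp add: field_simps)
    finally show ?thesis unfolding A_def E_def U_def a_def b_def .
  qed
  have tele: "(\<Sum>t\<le>n. p t - p (Suc t)) = p 0 - p (Suc n)" for p :: "nat \<Rightarrow> real" and n
    by (induction n) auto
  have path: "(\<Sum>t\<le>m. A w t) \<le> 2 / lam * Gap w + (\<Sum>t\<le>m. E w t) - (1 - ell * lam) * (\<Sum>t\<le>m. U w t)" for w
  proof -
    have "(\<Sum>t\<le>m. A w t) \<le> (\<Sum>t\<le>m. 2 / lam * (g w (ytil w t) - g w (ytil w (Suc t))) + E w t - (1 - ell * lam) * U w t)"
      by (rule sum_mono) (rule step)
    also have "\<dots> = 2 / lam * (\<Sum>t\<le>m. g w (ytil w t) - g w (ytil w (Suc t))) + (\<Sum>t\<le>m. E w t) - (1 - ell * lam) * (\<Sum>t\<le>m. U w t)"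
      by (simp only: sum_subtractf sum.distrib flip: sum_distrib_left)
    also have "(\<Sum>t\<le>m. g w (ytil w t) - g w (ytil w (Suc t))) = g w (ytil w 0) - g w (ytil w (Suc m))"
      by (rule tele)
    also have "\<dots> \<le> Gap w" unfolding Gap_def using ystar_min[of w "ytil w (Suc m)"] by simp
    finally show ?thesis using lam_pos by (simp add: divide_right_mono)
  qed
  have iA: "integrable M (\<lambda>w. A w t)" if "t \<le> m" for t using int_grad[OF that] by (simp add: A_def)
  have iE: "integrable M (\<lambda>w. E w t)" if "t \<le> m" for t using int_err[OF that] by (simp add: E_def)
  have iU: "integrable M (\<lambda>w. U w t)" if "t \<le> m" for t using int_uhat[OF that] by (simp add: U_def)
  have iG: "integrable M Gap" using int_gap by (simp add: Gap_def)
  have "(\<Sum>t\<le>m. \<integral>w. A w t \<partial>M) = (\<integral>w. (\<Sum>t\<le>m. A w t) \<partial>M)"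
    using iA by (simp add: Bochner_Integration.integral_sum)
  also have "\<dots> \<le> (\<integral>w. 2 / lam * Gap w + (\<Sum>t\<le>m. E w t) - (1 - ell * lam) * (\<Sum>t\<le>m. U w t) \<partial>M)"
  proof (rule integral_mono)
    show "integrable M (\<lambda>w. \<Sum>t\<le>m. A w t)" using Bochner_Integration.integrable_sum[of "{..m}" M "\<lambda>t w. A w t"] iA by simp
    have "integrable M (\<lambda>w. \<Sum>t\<le>m. E w t)" using Bochner_Integration.integrable_sum[of "{..m}" M "\<lambda>t w. E w t"] iE by simp
    moreover have "integrable M (\<lambda>w. \<Sum>t\<le>m. U w t)" using Bochner_Integration.integrable_sum[of "{..m}" M "\<lambda>t w. U w t"] iU by simp
    ultimately show "integrable M (\<lambda>w. 2 / lam * Gap w + (\<Sum>t\<le>m. E w t) - (1 - ell * lam) * (\<Sum>t\<le>m. U w t))"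
      using iG by (intro Bochner_Integration.integrable_diff Bochner_Integration.integrable_add integrable_mult_right)
    show "(\<Sum>t\<le>m. A w t) \<le> 2 / lam * Gap w + (\<Sum>t\<le>m. E w t) - (1 - ell * lam) * (\<Sum>t\<le>m. U w t)" for w
      by (rule path)
  qed
  also have "\<dots> = 2 / lam * (\<integral>w. Gap w \<partial>M) + (\<Sum>t\<le>m. \<integral>w. E w t \<partial>M) - (1 - ell * lam) * (\<Sum>t\<le>m. \<integral>w. U w t \<partial>M)"
  proof -
    have sE: "integrable M (\<lambda>w. \<Sum>t\<le>m. E w t)" using Bochner_Integration.integrable_sum[of "{..m}" M "\<lambda>t w. E w t"] iE by simp
    have sU: "integrable M (\<lambda>w. \<Sum>t\<le>m. U w t)" using Bochner_Integration.integrable_sum[of "{..m}" M "\<lambda>t w. U w t"] iU by simp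
    have i1: "integrable M (\<lambda>w. 2 / lam * Gap w)" using iG by simp
    have i2: "integrable M (\<lambda>w. 2 / lam * Gap w + (\<Sum>t\<le>m. E w t))" using i1 sE by simp
    have i3: "integrable M (\<lambda>w. (1 - ell * lam) * (\<Sum>t\<le>m. U w t))" using sU by simp
    have "(\<integral>w. 2 / lam * Gap w + (\<Sum>t\<le>m. E w t) - (1 - ell * lam) * (\<Sum>t\<le>m. U w t) \<partial>M)
        = (\<integral>w. 2 / lam * Gap w + (\<Sum>t\<le>m. E w t) \<partial>M) - (\<integral>w. (1 - ell * lam) * (\<Sum>t\<le>m. U w t) \<partial>M)"
      by (rule Bochner_Integration.integral_diff[OF i2 i3])
    also have "(\<integral>w. 2 / lam * Gap w + (\<Sum>t\<le>m. E w t) \<partial>M) = (\<integral>w. 2 / lam * Gap w \<partial>M) + (\<integral>w. (\<Sum>t\<le>m. E w t) \<partial>M)"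
      by (rule Bochner_Integration.integral_add[OF i1 sE])
    also have "(\<integral>w. 2 / lam * Gap w \<partial>M) = 2 / lam * (\<integral>w. Gap w \<partial>M)" by simp
    also have "(\<integral>w. (\<Sum>t\<le>m. E w t) \<partial>M) = (\<Sum>t\<le>m. \<integral>w. E w t \<partial>M)"
      by (rule Bochner_Integration.integral_sum) (use iE in auto)
    also have "(\<integral>w. (1 - ell * lam) * (\<Sum>t\<le>m. U w t) \<partial>M) = (1 - ell * lam) * (\<integral>w. (\<Sum>t\<le>m. U w t) \<partial>M)" by simp
    also have "(\<integral>w. (\<Sum>t\<le>m. U w t) \<partial>M) = (\<Sum>t\<le>m. \<integral>w. U w t \<partial>M)"
      by (rule Bochner_Integration.integral_sum) (use iU in auto)
    finally show ?thesis .
  qed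
  finally show ?thesis unfolding A_def E_def U_def Gap_def .
qed

end
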